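(* Let $w$ be a positive integer, $x$ an integer with $0\le x\le p-1$, and $h$ a non-negative integer. If $T_n(x)\equiv x\pmod p$ and $T'_n(x)\equiv 1\pmod{p^w}$, then $T_n(x+hp)\equiv x+hp\pmod{p^t}$ for every integer $t$ with $1\le t\le w+1$.
   Context: $p$ is a prime with $p>3$ and $n>1$ is an integer with $\gcd(n,p)=\gcd(n,p^2-1)=1$. $T_n(x)\in\mathbb{Z}[x]$ is the Chebyshev polynomial of the first kind: $T_0=1$, $T_1=x$, $T_d=2xT_{d-1}-T_{d-2}$; $T'_n$ is its derivative. *)

theory Defs
  imports "HOL-Computational_Algebra.Polynomial" "HOL-Number_Theory.Number_Theory"
begin

fun cheb_T :: "nat \<Rightarrow> int poly" where
  "cheb_T 0 = 1"
| "cheb_T (Suc 0) = [:0, 1:]"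
| "cheb_T (Suc (Suc d)) = [:0, 2:] * cheb_T (Suc d) - cheb_T d"

end

theory Submission
  imports Defs
begin

fun cheb_V :: "nat \<Rightarrow> int poly" where
  "cheb_V 0 = 0"
| "cheb_V (Suc 0) = 1"
| "cheb_V (Suc (Suc d)) = [:0, 2:] * cheb_V (Suc d) - cheb_V d"

definition Xp :: "int poly" where "Xp = [:0,1:]"

lemma two_X: "[:0, 2:] * P = 2 * Xp * (P::int poly)"
proof -
  have "[:0, 2:] * P = Polynomial.smult 2 (Xp * P)" by (simp add: Xp_def)
  also have "\<dots> = Xp * P + Xp * P" using smult_add_left[of 1 1 "Xp * P"] by simp
  also have "\<dots> = 2 * Xp * P" by (simp add: mult_2 algebra_simps)
  finally show ?thesis .
qed

lemma TS: "cheb_T (Suc (Suc d)) = 2 * Xp * cheb_T (Suc d) - cheb_T d"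
  by (simp only: cheb_T.simps two_X)
lemma VS: "cheb_V (Suc (Suc d)) = 2 * Xp * cheb_V (Suc d) - cheb_V d"
  by (simp only: cheb_V.simps two_X)
lemma T1: "cheb_T (Suc 0) = Xp" by (simp add: Xp_def)

declare cheb_T.simps(2)[simp del] T1[simp] cheb_T.simps(3)[simp del] cheb_V.simps(3)[simp del]

lemma T_XV: "cheb_T (Suc m) = Xp * cheb_V (Suc m) - cheb_V m"
proof (induction m rule: nat_less_induct)
  case (1 m)
  show ?case
  proof (cases m)
    case 0 then show ?thesis by (simp add: cheb_T.simps(2) Xp_def)
  next
    case (Suc k)
    show ?thesis
    proof (cases k)
      case 0 then show ?thesis using Suc by (simp add: TS VS T1 algebra_simps)
    next
      case (Suc j)
      have a: "cheb_T (Suc (Suc j)) = Xp * cheb_V (Suc (Suc j)) - cheb_V (Suc j)"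
        using 1 Suc \<open>m = Suc k\<close> by auto
      have b: "cheb_T (Suc j) = Xp * cheb_V (Suc j) - cheb_V j"
        using 1 Suc \<open>m = Suc k\<close> by auto
      have "cheb_T (Suc m) = 2 * Xp * cheb_T (Suc (Suc j)) - cheb_T (Suc j)"
        using Suc \<open>m = Suc k\<close> TS by simp
      also have "\<dots> = Xp * cheb_V (Suc m) - cheb_V m"
        unfolding a b using Suc \<open>m = Suc k\<close> by (simp add: VS algebra_simps)
      finally show ?thesis .
    qed
  qed
qed

lemma pderiv_T: "pderiv (cheb_T m) = of_nat m * cheb_V m"
proof (induction m rule: cheb_T.induct)
  case 1 then show ?case by simp
next
  case 2 then show ?case by (simp add: pderiv_pCons Xp_def)
next
  case (3 d)
  have e: "cheb_T (Suc d) = Xp * cheb_V (Suc d) - cheb_V d" by (rule T_XV)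
  have dX: "pderiv Xp = 1" by (simp add: Xp_def pderiv_pCons)
  have "pderiv (cheb_T (Suc (Suc d))) = 2 * cheb_T (Suc d) + 2 * Xp * pderiv (cheb_T (Suc d)) - pderiv (cheb_T d)"
    by (simp add: TS pderiv_mult pderiv_diff dX)
  also have "\<dots> = of_nat (Suc (Suc d)) * cheb_V (Suc (Suc d))"
    unfolding 3 unfolding e by (simp add: algebra_simps VS)
  finally show ?case .
qed

lemma poly_Xp[simp]: "poly Xp t = t" by (simp add: Xp_def)

lemma cheb_real:
  fixes t :: int and s :: real
  assumes s2: "s^2 = (of_int t)^2 - 1"
  shows "of_int (poly (cheb_T m) t) = ((of_int t+s)^m + (of_int t-s)^m)/2 \<and>
         s * of_int (poly (cheb_V m) t) = ((of_int t+s)^m - (of_int t-s)^m)/2"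
proof (induction m rule: cheb_T.induct)
  case 1 then show ?case by simp
next
  case 2 then show ?case by (simp add: cheb_V.simps)
next
  case (3 d)
  define r where "r = real_of_int t"
  define Z1 where "Z1 = (r+s)^(Suc d)"
  define Z0 where "Z0 = (r+s)^d"
  define W1 where "W1 = (r-s)^(Suc d)"
  define W0 where "W0 = (r-s)^d"
  have z2: "(r+s)^2 = 2*r*(r+s) - 1" using s2 unfolding r_def by (simp add: power2_eq_square algebra_simps)
  have w2: "(r-s)^2 = 2*r*(r-s) - 1" using s2 unfolding r_def by (simp add: power2_eq_square algebra_simps)
  have zz: "(r+s)^(Suc (Suc d)) = 2*r*Z1 - Z0"
  proof -
    have "(r+s)^(Suc (Suc d)) = (r+s)^2 * (r+s)^d" by (simp add: power2_eq_square)
    also have "\<dots> = (2*r*(r+s) - 1) * (r+s)^d" unfolding z2 ..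
    also have "\<dots> = 2*r*Z1 - Z0" unfolding Z1_def Z0_def by (simp add: algebra_simps)
    finally show ?thesis .
  qed
  have ww: "(r-s)^(Suc (Suc d)) = 2*r*W1 - W0"
  proof -
    have "(r-s)^(Suc (Suc d)) = (r-s)^2 * (r-s)^d" by (simp add: power2_eq_square)
    also have "\<dots> = (2*r*(r-s) - 1) * (r-s)^d" unfolding w2 ..
    also have "\<dots> = 2*r*W1 - W0" unfolding W1_def W0_def by (simp add: algebra_simps)
    finally show ?thesis .
  qed
  have pT: "poly (cheb_T (Suc (Suc d))) t = 2*t*poly (cheb_T (Suc d)) t - poly (cheb_T d) t"
    by (simp add: TS)
  have pV: "poly (cheb_V (Suc (Suc d))) t = 2*t*poly (cheb_V (Suc d)) t - poly (cheb_V d) t"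
    by (simp add: VS)
  have I1: "of_int (poly (cheb_T (Suc d)) t) = (Z1 + W1)/2" "s * of_int (poly (cheb_V (Suc d)) t) = (Z1 - W1)/2"
    using 3(1) unfolding Z1_def W1_def r_def by auto
  have I0: "of_int (poly (cheb_T d) t) = (Z0 + W0)/2" "s * of_int (poly (cheb_V d) t) = (Z0 - W0)/2"
    using 3(2) unfolding Z0_def W0_def r_def by auto
  have "of_int (poly (cheb_T (Suc (Suc d))) t) = 2*r*of_int (poly (cheb_T (Suc d)) t) - of_int (poly (cheb_T d) t)"
    unfolding pT r_def by simp
  also have "\<dots> = ((r+s)^(Suc (Suc d)) + (r-s)^(Suc (Suc d)))/2"
    unfolding zz ww I1 I0 by (simp add: field_simps)
  finally have A: "of_int (poly (cheb_T (Suc (Suc d))) t) = ((r+s)^(Suc (Suc d)) + (r-s)^(Suc (Suc d)))/2" .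
  have "s * of_int (poly (cheb_V (Suc (Suc d))) t) = 2*r*(s*of_int (poly (cheb_V (Suc d)) t)) - s*of_int (poly (cheb_V d) t)"
    unfolding pV r_def by (simp add: algebra_simps)
  also have "\<dots> = ((r+s)^(Suc (Suc d)) - (r-s)^(Suc (Suc d)))/2"
    unfolding zz ww I1 I0 by (simp add: field_simps)
  finally have B: "s * of_int (poly (cheb_V (Suc (Suc d))) t) = ((r+s)^(Suc (Suc d)) - (r-s)^(Suc (Suc d)))/2" .
  show ?case unfolding r_def[symmetric] using A B by (rule conjI)
qed

lemma poly_eq_from_ge2:
  fixes P Q :: "int poly"
  assumes "\<And>t. t \<ge> 2 \<Longrightarrow> poly P t = poly Q t"
  shows "P = Q"
proof (rule ccontr)
  assume "P \<noteq> Q"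
  hence "P - Q \<noteq> 0" by simp
  hence f: "finite {x. poly (P - Q) x = 0}" by (rule poly_roots_finite)
  have "{2..} \<subseteq> {x. poly (P - Q) x = 0}" using assms by auto
  hence "finite {(2::int)..}" using f finite_subset by blast
  moreover have "\<not> finite {(2::int)..}" by (rule infinite_Ici)
  ultimately show False by contradiction
qed

definition Dp :: "int poly" where "Dp = Xp^2 - 1"
lemma poly_Dp[simp]: "poly Dp t = t^2 - 1" by (simp add: Dp_def)

locale ge2 =
  fixes t :: int
  assumes t2: "t \<ge> 2"
begin
definition "r = real_of_int t"
definition "s = sqrt (r^2 - 1)"
definition "z = r + s"
definition "w = r - s"
lemma r2: "r \<ge> 2" using t2 unfolding r_def by simp
lemma rr: "r * r \<ge> 4" using r2 mult_mono[of 2 r 2 r] by simp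
lemma s2: "s^2 = r^2 - 1" unfolding s_def using rr by (simp add: power2_eq_square)
lemma s_nz: "s \<noteq> 0" unfolding s_def using rr by (simp add: power2_eq_square)
lemma zw: "z * w = 1"
proof -
  have "z * w = r^2 - s^2" unfolding z_def w_def by (simp add: power2_eq_square algebra_simps)
  thus ?thesis unfolding s2 by simp
qed
lemma zw_pow: "z^a * w^a = 1"
proof -
  have "z^a * w^a = (z*w)^a" by (simp only: power_mult_distrib)
  thus ?thesis unfolding zw by simp
qed
lemma sT: "s^2 = (real_of_int t)^2 - 1" using s2 unfolding r_def .
lemma Tf: "of_int (poly (cheb_T m) t) = (z^m + w^m)/2"
  using conjunct1[OF cheb_real[OF sT]] unfolding z_def w_def r_def .
lemma Vf: "s * of_int (poly (cheb_V m) t) = (z^m - w^m)/2"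
  using conjunct2[OF cheb_real[OF sT]] unfolding z_def w_def r_def .
end

lemma E2: "cheb_T m ^ 2 - Dp * cheb_V m ^ 2 = 1"
proof (rule poly_eq_from_ge2)
  fix t :: int assume "t \<ge> 2"
  then interpret ge2 t by unfold_locales
  have "real_of_int (poly (cheb_T m ^ 2 - Dp * cheb_V m ^ 2) t)
     = (of_int (poly (cheb_T m) t))^2 - (s * of_int (poly (cheb_V m) t))^2"
    using s2 by (simp add: r_def power_mult_distrib)
  also have "\<dots> = z^m * w^m" unfolding Tf Vf by (simp add: power2_eq_square field_simps)
  also have "\<dots> = 1" by (rule zw_pow)
  finally show "poly (cheb_T m ^ 2 - Dp * cheb_V m ^ 2) t = poly 1 t"
    by (metis of_int_eq_1_iff poly_1)
qed

lemma E2i: "poly (cheb_T m) t ^ 2 - (t^2 - 1) * poly (cheb_V m) t ^ 2 = 1"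
proof -
  have "poly (cheb_T m ^ 2 - Dp * cheb_V m ^ 2) t = 1" by (simp only: E2) simp
  thus ?thesis by simp
qed

lemma E3: "cheb_V (a * b) = cheb_V a * pcompose (cheb_V b) (cheb_T a)"
proof (rule poly_eq_from_ge2)
  fix t :: int assume "t \<ge> 2"
  then interpret ge2 t by unfold_locales
  define t' where "t' = poly (cheb_T a) t"
  define s' where "s' = s * of_int (poly (cheb_V a) t)"
  have "s'^2 = (of_int t')^2 - 1"
  proof -
    have "(of_int t')^2 - 1 = real_of_int (t'^2 - 1)" by simp
    also have "t'^2 - 1 = (t^2 - 1) * poly (cheb_V a) t ^ 2" using E2i[of a t] unfolding t'_def by simp
    finally show ?thesis unfolding s'_def using s2 by (simp add: r_def power_mult_distrib)
  qed
  from cheb_real[OF this, of b]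
  have C: "s' * of_int (poly (cheb_V b) t') = ((of_int t' + s')^b - (of_int t' - s')^b)/2" by simp
  have zp: "of_int t' + s' = z^a" unfolding t'_def s'_def Tf Vf by (simp add: field_simps)
  have wp: "of_int t' - s' = w^a" unfolding t'_def s'_def Tf Vf by (simp add: field_simps)
  have h1: "s' * of_int (poly (cheb_V b) t') = (z^(a*b) - w^(a*b))/2" using C unfolding zp wp by (simp add: power_mult)
  have "s * (of_int (poly (cheb_V a) t) * of_int (poly (cheb_V b) t')) = s * of_int (poly (cheb_V (a*b)) t)"
    using h1 unfolding s'_def Vf[of "a*b", symmetric] by (simp add: mult.assoc)
  hence "real_of_int (poly (cheb_V a) t * poly (cheb_V b) t') = of_int (poly (cheb_V (a*b)) t)"
    using s_nz by simp
  thus "poly (cheb_V (a * b)) t = poly (cheb_V a * pcompose (cheb_V b) (cheb_T a)) t"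
    unfolding t'_def by (simp add: poly_pcompose del: of_int_mult) 
qed

lemma E3i: "poly (cheb_V (a * b)) t = poly (cheb_V a) t * poly (cheb_V b) (poly (cheb_T a) t)"
  by (simp add: E3 poly_pcompose)

lemma pow21: "(x::real)^(2*b+1) = x * x^b * x^b"
proof -
  have "x^(2*b+1) = x^(b+b+1)" by (simp add: mult_2)
  also have "\<dots> = x^b * x^b * x" by (simp only: power_add power_one_right)
  finally show ?thesis by (simp add: ac_simps)
qed

context ge2 begin
lemma zmw: "z - w = 2 * s" unfolding z_def w_def by simp
lemma zpw: "z + w = 2 * r" unfolding z_def w_def by simp
lemma Dr: "real_of_int (t^2 - 1) = s * s" using s2 by (simp add: r_def power2_eq_square)
end

lemma E4: "cheb_T (2*b+1) - Xp = 2 * Dp * cheb_V (b+1) * cheb_V b"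
proof (rule poly_eq_from_ge2)
  fix t :: int assume "t \<ge> 2"
  then interpret ge2 t by unfold_locales
  define Z where "Z = z^b"
  define W where "W = w^b"
  have ZW: "Z * W = 1" unfolding Z_def W_def by (rule zw_pow)

  have "real_of_int (poly (2 * Dp * cheb_V (b+1) * cheb_V b) t)
      = 2 * (s * of_int (poly (cheb_V (b+1)) t)) * (s * of_int (poly (cheb_V b) t))"
    using Dr by (simp add: algebra_simps)
  also have "\<dots> = 2 * ((z*Z - w*W)/2) * ((Z - W)/2)" unfolding Vf Z_def W_def by simp
  also have "\<dots> = (z*Z*Z + w*W*W - z*(Z*W) - w*(Z*W))/2"
    by (simp add: field_simps)
  also have "\<dots> = (z*Z*Z + w*W*W)/2 - (z + w)/2" unfolding ZW by (simp add: field_simps)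
  also have "\<dots> = real_of_int (poly (cheb_T (2*b+1) - Xp) t)"
  proof -
    have pz: "z^(2*b+1) = z*Z*Z" unfolding Z_def by (rule pow21)
    have pw: "w^(2*b+1) = w*W*W" unfolding W_def by (rule pow21)
    show ?thesis unfolding poly_diff of_int_diff poly_Xp Tf pz pw r_def[symmetric] zpw by simp
  qed
  finally show "poly (cheb_T (2*b+1) - Xp) t = poly (2 * Dp * cheb_V (b+1) * cheb_V b) t"
    by (simp only: of_int_eq_iff)
qed

lemma E6a: "cheb_V (2*c+1) = 2 * cheb_V (c+1) * cheb_T c - 1"
proof (rule poly_eq_from_ge2)
  fix t :: int assume "t \<ge> 2"
  then interpret ge2 t by unfold_locales
  define Z where "Z = z^c"
  define W where "W = w^c"
  have ZW: "Z * W = 1" unfolding Z_def W_def by (rule zw_pow)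

  have "s * real_of_int (poly (2 * cheb_V (c+1) * cheb_T c - 1) t)
      = 2 * (s * of_int (poly (cheb_V (c+1)) t)) * (of_int (poly (cheb_T c) t)) - s"
    by (simp add: algebra_simps)
  also have "\<dots> = 2 * ((z*Z - w*W)/2) * ((Z + W)/2) - (z - w)/2" unfolding Vf Tf Z_def W_def zmw by simp
  also have "\<dots> = (z*Z*Z - w*W*W + z*(Z*W) - w*(Z*W))/2 - (z - w)/2"
    by (simp add: field_simps)
  also have "\<dots> = (z*Z*Z - w*W*W)/2" unfolding ZW by (simp add: field_simps)
  also have "\<dots> = s * real_of_int (poly (cheb_V (2*c+1)) t)"
  proof -
    have pz: "z^(2*c+1) = z*Z*Z" unfolding Z_def by (rule pow21)
    have pw: "w^(2*c+1) = w*W*W" unfolding W_def by (rule pow21)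
    show ?thesis unfolding Vf pz pw ..
  qed
  finally have F: "s * real_of_int (poly (cheb_V (2*c+1)) t) = s * real_of_int (poly (2 * cheb_V (c+1) * cheb_T c - 1) t)" by (rule sym)
  hence "real_of_int (poly (cheb_V (2*c+1)) t) = real_of_int (poly (2 * cheb_V (c+1) * cheb_T c - 1) t)" using s_nz by (metis mult_cancel_left)
  thus "poly (cheb_V (2*c+1)) t = poly (2 * cheb_V (c+1) * cheb_T c - 1) t"
    by (simp only: of_int_eq_iff)
qed

lemma E6b: "cheb_V (2*b+1) = 2 * cheb_T (b+1) * cheb_V b + 1"
proof (rule poly_eq_from_ge2)
  fix t :: int assume "t \<ge> 2"
  then interpret ge2 t by unfold_locales
  define Z where "Z = z^b"
  define W where "W = w^b"
  have ZW: "Z * W = 1" unfolding Z_def W_def by (rule zw_pow)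

  have "s * real_of_int (poly (2 * cheb_T (b+1) * cheb_V b + 1) t)
      = 2 * (of_int (poly (cheb_T (b+1)) t)) * (s * of_int (poly (cheb_V b) t)) + s"
    by (simp add: algebra_simps)
  also have "\<dots> = 2 * ((z*Z + w*W)/2) * ((Z - W)/2) + (z - w)/2" unfolding Vf Tf Z_def W_def zmw by simp
  also have "\<dots> = (z*Z*Z - w*W*W - z*(Z*W) + w*(Z*W))/2 + (z - w)/2"
    by (simp add: field_simps)
  also have "\<dots> = (z*Z*Z - w*W*W)/2" unfolding ZW by (simp add: field_simps)
  also have "\<dots> = s * real_of_int (poly (cheb_V (2*b+1)) t)"
  proof -
    have pz: "z^(2*b+1) = z*Z*Z" unfolding Z_def by (rule pow21)
    have pw: "w^(2*b+1) = w*W*W" unfolding W_def by (rule pow21)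
    show ?thesis unfolding Vf pz pw ..
  qed
  finally have F: "s * real_of_int (poly (cheb_V (2*b+1)) t) = s * real_of_int (poly (2 * cheb_T (b+1) * cheb_V b + 1) t)" by (rule sym)
  hence "real_of_int (poly (cheb_V (2*b+1)) t) = real_of_int (poly (2 * cheb_T (b+1) * cheb_V b + 1) t)" using s_nz by (metis mult_cancel_left)
  thus "poly (cheb_V (2*b+1)) t = poly (2 * cheb_T (b+1) * cheb_V b + 1) t"
    by (simp only: of_int_eq_iff)
qed

lemma sum_pm: "(s::real)^k + (-s)^k = (if even k then 2 else 0) * (s*s)^(k div 2)"
proof (cases "even k")
  case True then obtain q where "k = 2*q" by blast
  then show ?thesis by (simp add: power_mult power2_eq_square)
next
  case False then obtain q where "k = 2*q+1" using oddE by blast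
  then show ?thesis by (simp add: power_mult power2_eq_square)
qed

lemma dif_pm: "(s::real)^k - (-s)^k = s * ((if odd k then 2 else 0) * (s*s)^(k div 2))"
proof (cases "even k")
  case True then obtain q where "k = 2*q" by blast
  then show ?thesis by (simp add: power_mult power2_eq_square)
next
  case False then obtain q where "k = 2*q+1" using oddE by blast
  then show ?thesis by (simp add: power_mult power2_eq_square)
qed

context ge2 begin
lemma binz: "z^m = (\<Sum>k\<le>m. of_nat (m choose k) * s^k * r^(m-k))"
  unfolding z_def using binomial_ring[of s r m] by (simp add: add.commute)
lemma binw: "w^m = (\<Sum>k\<le>m. of_nat (m choose k) * (-s)^k * r^(m-k))"
  unfolding w_def using binomial_ring[of "-s" r m] by (simp add: add.commute)
end

lemma ET: "2 * cheb_T m = (\<Sum>k\<le>m. of_nat (m choose k) * (if even k then 2 else 0) * Xp^(m-k) * Dp^(k div 2))"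
proof (rule poly_eq_from_ge2)
  fix t :: int assume "t \<ge> 2"
  then interpret ge2 t by unfold_locales
  have "real_of_int (poly (2 * cheb_T m) t) = z^m + w^m" using Tf[of m] by simp
  also have "\<dots> = (\<Sum>k\<le>m. of_nat (m choose k) * (s^k + (-s)^k) * r^(m-k))"
    unfolding binz binw sum.distrib[symmetric] by (rule sum.cong) (simp_all add: algebra_simps)
  also have "\<dots> = (\<Sum>k\<le>m. of_nat (m choose k) * (if even k then 2 else 0) * r^(m-k) * (s*s)^(k div 2))"
    unfolding sum_pm by (rule sum.cong) (simp_all add: algebra_simps)
  also have "\<dots> = real_of_int (poly (\<Sum>k\<le>m. of_nat (m choose k) * (if even k then 2 else 0) * Xp^(m-k) * Dp^(k div 2)) t)"
    unfolding poly_sum of_int_sum by (rule sum.cong) (simp_all add: Dr[symmetric] r_def)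
  finally show "poly (2 * cheb_T m) t = poly (\<Sum>k\<le>m. of_nat (m choose k) * (if even k then 2 else 0) * Xp^(m-k) * Dp^(k div 2)) t"
    by (rule of_int_eq_iff[THEN iffD1])
qed

lemma EV: "2 * cheb_V m = (\<Sum>k\<le>m. of_nat (m choose k) * (if odd k then 2 else 0) * Xp^(m-k) * Dp^(k div 2))"
proof (rule poly_eq_from_ge2)
  fix t :: int assume "t \<ge> 2"
  then interpret ge2 t by unfold_locales
  have "s * real_of_int (poly (2 * cheb_V m) t) = z^m - w^m" using Vf[of m] by simp
  also have "\<dots> = (\<Sum>k\<le>m. of_nat (m choose k) * (s^k - (-s)^k) * r^(m-k))"
    unfolding binz binw sum_subtractf[symmetric] by (rule sum.cong) (simp_all add: algebra_simps)
  also have "\<dots> = s * (\<Sum>k\<le>m. of_nat (m choose k) * (if odd k then 2 else 0) * r^(m-k) * (s*s)^(k div 2))"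
    unfolding sum_distrib_left by (rule sum.cong) (simp_all only: dif_pm ac_simps)
  also have "\<dots> = s * real_of_int (poly (\<Sum>k\<le>m. of_nat (m choose k) * (if odd k then 2 else 0) * Xp^(m-k) * Dp^(k div 2)) t)"
    unfolding poly_sum of_int_sum by (rule arg_cong[where f="\<lambda>x. s * x"], rule sum.cong) (simp_all add: Dr[symmetric] r_def)
  finally have "real_of_int (poly (2 * cheb_V m) t) = real_of_int (poly (\<Sum>k\<le>m. of_nat (m choose k) * (if odd k then 2 else 0) * Xp^(m-k) * Dp^(k div 2)) t)"
    by (rule mult_left_cancel[OF s_nz, THEN iffD1])
  thus "poly (2 * cheb_V m) t = poly (\<Sum>k\<le>m. of_nat (m choose k) * (if odd k then 2 else 0) * Xp^(m-k) * Dp^(k div 2)) t"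
    by (rule of_int_eq_iff[THEN iffD1])
qed

lemma poly_dvd_diff: "(m::int) dvd a - b \<Longrightarrow> m dvd poly P a - poly P b"
proof (induction P)
  case 0 then show ?case by simp
next
  case (pCons c P)
  have "poly (pCons c P) a - poly (pCons c P) b = a * (poly P a - poly P b) + (a - b) * poly P b"
    by (simp add: algebra_simps)
  then show ?case using pCons by simp
qed

lemma TV_one: "poly (cheb_T m) 1 = 1 \<and> poly (cheb_V m) 1 = int m"
proof (induction m rule: cheb_T.induct)
  case 1 then show ?case by simp
next
  case 2 then show ?case by (simp add: cheb_V.simps)
next
  case (3 d) then show ?case by (simp add: TS VS)
qed

lemma TV_m1: "poly (cheb_T m) (-1) = (-1)^m \<and> poly (cheb_V m) (-1) = (-1)^(m+1) * int m"
proof (induction m rule: cheb_T.induct)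
  case 1 then show ?case by simp
next
  case 2 then show ?case by (simp add: cheb_V.simps)
next
  case (3 d)
  define e where "e = (-1::int)^d"
  have a1: "poly (cheb_T (Suc d)) (-1) = - e" using 3 by (simp add: e_def)
  have a2: "poly (cheb_V (Suc d)) (-1) = e * int (Suc d)" using 3 by (simp add: e_def)
  have a3: "poly (cheb_T d) (-1) = e" using 3 by (simp add: e_def)
  have a4: "poly (cheb_V d) (-1) = - e * int d" using 3 by (simp add: e_def)
  have pT: "poly (cheb_T (Suc (Suc d))) (-1) = -2 * poly (cheb_T (Suc d)) (-1) - poly (cheb_T d) (-1)" by (simp add: TS)
  have pV: "poly (cheb_V (Suc (Suc d))) (-1) = -2 * poly (cheb_V (Suc d)) (-1) - poly (cheb_V d) (-1)" by (simp add: VS)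
  have q1: "(-1::int)^(Suc (Suc d)) = e" by (simp add: e_def)
  have q2: "(-1::int)^(Suc (Suc d) + 1) = - e" by (simp add: e_def)
  show ?case unfolding pT pV a1 a2 a3 a4 q1 q2 by (simp add: algebra_simps)
qed

lemma fermat_int:
  assumes "prime p"
  shows "int p dvd t^p - t"
proof -
  define u where "u = nat (t mod int p)"
  have p0: "p > 1" using assms prime_gt_1_nat by blast
  have ue: "int u = t mod int p" using p0 unfolding u_def by simp
  have tu: "[t = int u] (mod int p)" unfolding ue cong_def by simp
  show ?thesis
  proof (cases "p dvd u")
    case True
    hence "int p dvd int u" by simp
    hence "int p dvd t" using cong_dvd_iff[OF tu] by simp
    moreover have "t dvd t^p" using p0 by (simp add: dvd_power)
    ultimately have "int p dvd t^p" by (rule dvd_trans)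
    thus ?thesis using \<open>int p dvd t\<close> by (rule dvd_diff)
  next
    case False
    have "[u^(p-1) = 1] (mod p)" by (rule fermat_theorem[OF assms False])
    hence "[u^(p-1) * u = 1 * u] (mod p)" by (rule cong_mult) simp
    moreover have "u^(p-1) * u = u^p"
    proof -
      from p0 obtain q where "p = Suc q" by (cases p) auto
      thus ?thesis by (simp add: mult.commute)
    qed
    ultimately have "[u^p = u] (mod p)" by simp
    hence c1: "[int u^p = int u] (mod int p)" unfolding cong_int_iff[symmetric] by simp
    have c2: "[t^p = int u^p] (mod int p)" using tu by (rule cong_pow)
    have "[t^p = t] (mod int p)" using cong_trans[OF cong_trans[OF c2 c1] cong_sym[OF tu]] .
    thus ?thesis by (simp add: cong_iff_dvd_diff dvd_diff_commute)
  qed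
qed

lemma ET_int: "2 * poly (cheb_T m) t = (\<Sum>k\<le>m. int (m choose k) * (if even k then 2 else 0) * t^(m-k) * (t^2-1)^(k div 2))"
proof -
  have "poly (2 * cheb_T m) t = poly (\<Sum>k\<le>m. of_nat (m choose k) * (if even k then 2 else 0) * Xp^(m-k) * Dp^(k div 2)) t"
    by (simp only: ET)
  also have "\<dots> = (\<Sum>k\<le>m. int (m choose k) * (if even k then 2 else 0) * t^(m-k) * (t^2-1)^(k div 2))"
    unfolding poly_sum by (rule sum.cong) simp_all
  finally show ?thesis by simp
qed

lemma EV_int: "2 * poly (cheb_V m) t = (\<Sum>k\<le>m. int (m choose k) * (if odd k then 2 else 0) * t^(m-k) * (t^2-1)^(k div 2))"
proof -
  have "poly (2 * cheb_V m) t = poly (\<Sum>k\<le>m. of_nat (m choose k) * (if odd k then 2 else 0) * Xp^(m-k) * Dp^(k div 2)) t"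
    by (simp only: EV)
  also have "\<dots> = (\<Sum>k\<le>m. int (m choose k) * (if odd k then 2 else 0) * t^(m-k) * (t^2-1)^(k div 2))"
    unfolding poly_sum by (rule sum.cong) simp_all
  finally show ?thesis by simp
qed

lemma prime_odd_not_dvd2:
  assumes "prime p" "p > 2" shows "\<not> int p dvd 2"
proof
  assume "int p dvd 2"
  hence "p dvd 2" by (metis of_nat_numeral int_dvd_int_iff)
  hence "p \<le> 2" by (simp add: dvd_imp_le)
  thus False using assms by simp
qed

lemma cancel2:
  assumes "prime p" "p > 2" "int p ^ e dvd 2 * a" shows "int p ^ e dvd a"
proof -
  have "coprime (int p ^ e) 2"
  proof -
    have "coprime (int p) 2" using prime_imp_coprime[of "int p" 2] assms(1) prime_odd_not_dvd2[OF assms(1,2)] by simp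
    thus ?thesis by simp
  qed
  thus ?thesis using assms(3) coprime_dvd_mult_right_iff by blast
qed

lemma cancel2':
  assumes "prime p" "p > 2" "int p dvd 2 * a" shows "int p dvd a"
  using cancel2[of p 1 a] assms by simp

lemma FT0:
  assumes "prime p" "p > 2"
  shows "int p dvd poly (cheb_T p) t - t"
proof -
  define f where "f k = int (p choose k) * (if even k then 2 else 0) * t^(p-k) * (t^2-1)^(k div 2)" for k
  have S: "2 * poly (cheb_T p) t = f 0 + (\<Sum>i<p. f (Suc i))"
    unfolding ET_int f_def[symmetric] by (rule sum.atMost_shift)
  have f0: "f 0 = 2 * t^p" unfolding f_def by simp
  have fi: "int p dvd f (Suc i)" if "i < p" for i
  proof (cases "Suc i < p")
    case True
    have "p dvd (p choose Suc i)" by (rule dvd_choose_prime) (use True assms in auto)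
    hence "int p dvd int (p choose Suc i)" by simp
    thus ?thesis unfolding f_def by (simp add: mult.assoc)
  next
    case False
    hence "Suc i = p" using that by simp
    hence "odd (Suc i)" using assms prime_odd_nat by auto
    thus ?thesis unfolding f_def by simp
  qed
  have "int p dvd (\<Sum>i<p. f (Suc i))" by (rule dvd_sum) (use fi in auto)
  moreover have "2 * (poly (cheb_T p) t - t^p) = (\<Sum>i<p. f (Suc i))" using S f0 by (simp add: right_diff_distrib)
  ultimately have "int p dvd 2 * (poly (cheb_T p) t - t^p)" by simp
  hence A: "int p dvd poly (cheb_T p) t - t^p" by (rule cancel2'[OF assms])
  have B: "int p dvd t^p - t" by (rule fermat_int[OF assms(1)])
  have "int p dvd (poly (cheb_T p) t - t^p) + (t^p - t)" using A B by (rule dvd_add)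
  thus ?thesis by simp
qed

lemma dvd_pow_pos: "(a::int) dvd b \<Longrightarrow> m > 0 \<Longrightarrow> a dvd b^m"
  by (metis dvd_power dvd_trans)

lemma R1:
  assumes p: "prime p" "p > 3" and d: "int p dvd t^2 - 1"
  shows "int p ^ 2 dvd poly (cheb_V p) t - int p"
proof -
  define g where "g k = int (p choose k) * (if odd k then 2 else 0) * t^(p-k) * (t^2-1)^(k div 2)" for k
  obtain q where pq: "p = Suc q" using p by (cases p) auto
  have S: "2 * poly (cheb_V p) t = g 0 + (g 1 + (\<Sum>i<q. g (Suc (Suc i))))"
  proof -
    have "2 * poly (cheb_V p) t = g 0 + (\<Sum>i<p. g (Suc i))"
      unfolding EV_int g_def[symmetric] by (rule sum.atMost_shift)
    also have "(\<Sum>i<p. g (Suc i)) = g 1 + (\<Sum>i<q. g (Suc (Suc i)))"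
      unfolding pq by (subst sum.lessThan_Suc_shift) simp
    finally show ?thesis .
  qed
  have g0: "g 0 = 0" unfolding g_def by simp
  have g1: "g 1 = 2 * int p * t^(p-1)" unfolding g_def by simp
  have gi: "int p ^ 2 dvd g (Suc (Suc i))" if "i < q" for i
  proof (cases "odd (Suc (Suc i))")
    case False thus ?thesis unfolding g_def by simp
  next
    case True
    show ?thesis
    proof (cases "Suc (Suc i) < p")
      case True
      have "p dvd (p choose Suc (Suc i))" by (rule dvd_choose_prime) (use True p in auto)
      hence c: "int p dvd int (p choose Suc (Suc i))" by simp
      have e: "int p dvd (t^2-1)^(Suc (Suc i) div 2)" by (rule dvd_pow_pos[OF d]) simp
      have "int p * int p dvd int (p choose Suc (Suc i)) * (t^2-1)^(Suc (Suc i) div 2)"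
        using c e by (rule mult_dvd_mono)
      hence "int p ^ 2 dvd int (p choose Suc (Suc i)) * (t^2-1)^(Suc (Suc i) div 2)"
        by (simp add: power2_eq_square)
      hence "int p ^ 2 dvd int (p choose Suc (Suc i)) * (t^2-1)^(Suc (Suc i) div 2) * ((if odd (Suc (Suc i)) then 2 else 0) * t^(p - Suc (Suc i)))"
        by (rule dvd_mult2)
      thus ?thesis unfolding g_def by (simp add: ac_simps)
    next
      case False
      hence k: "Suc (Suc i) = p" using that pq by simp
      have "p \<ge> 5"
      proof -
        have "odd p" using k True by simp
        thus ?thesis using p(2) by presburger
      qed
      hence ge2: "p div 2 \<ge> 2" by simp
      have "int p ^ 2 dvd (t^2-1)^2" using d by simp
      moreover have "(t^2-1)^2 dvd (t^2-1)^(p div 2)" using ge2 by (rule le_imp_power_dvd)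
      ultimately have "int p ^ 2 dvd (t^2-1)^(p div 2)" by (rule dvd_trans)
      hence "int p ^ 2 dvd (t^2-1)^(p div 2) * (int (p choose p) * (if odd p then 2 else 0) * t^(p-p))"
        by (rule dvd_mult2)
      thus ?thesis unfolding g_def k by (simp add: ac_simps)
    qed
  qed
  have Sd: "int p ^ 2 dvd (\<Sum>i<q. g (Suc (Suc i)))" by (rule dvd_sum) (use gi in auto)
  have tp: "int p dvd t^(p-1) - 1"
  proof -
    have "odd p" using p prime_odd_nat by auto
    then obtain m where pm: "p - 1 = 2 * m" by (metis odd_two_times_div_two_nat dvd_triv_left)
    have "[t^2 = 1] (mod int p)" using d by (simp add: cong_iff_dvd_diff dvd_diff_commute)
    hence "[(t^2)^m = 1^m] (mod int p)" by (rule cong_pow)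
    hence "[t^(p-1) = 1] (mod int p)" unfolding pm by (simp add: power_mult)
    thus ?thesis by (simp add: cong_iff_dvd_diff)
  qed
  have "int p dvd 2 * (t^(p-1) - 1)" using tp by (rule dvd_mult)
  hence m: "int p * int p dvd int p * (2 * (t^(p-1) - 1))" by (rule mult_dvd_mono[OF dvd_refl])
  have e1: "int p * (2 * (t^(p-1) - 1)) = 2 * int p * t^(p-1) - 2 * int p" by (simp add: algebra_simps)
  have T2: "int p ^ 2 dvd 2 * int p * t^(p-1) - 2 * int p" using m unfolding e1 power2_eq_square .
  have eq: "2 * (poly (cheb_V p) t - int p) = (\<Sum>i<q. g (Suc (Suc i))) + (2 * int p * t^(p-1) - 2 * int p)"
    using S g0 g1 by simp
  have "int p ^ 2 dvd 2 * (poly (cheb_V p) t - int p)"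
    unfolding eq using Sd T2 by (rule dvd_add)
  moreover have p2: "p > 2" using p(2) by simp
  ultimately show ?thesis using cancel2[OF p(1)] by blast
qed

lemma L4:
  assumes p: "prime p" "p > 3"
  shows "int p dvd t^2 - 1 \<Longrightarrow> int p ^ (s+1) dvd poly (cheb_V (p^s)) t - int p ^ s"
proof (induction s arbitrary: t)
  case 0 then show ?case by (simp add: cheb_V.simps)
next
  case (Suc s)
  define t' where "t' = poly (cheb_T p) t"
  have E: "t'^2 - 1 = (t^2 - 1) * poly (cheb_V p) t ^ 2" using E2i[of p t] unfolding t'_def by simp
  have "int p dvd t'^2 - 1" unfolding E using Suc.prems by (rule dvd_mult2)
  from Suc.IH[OF this] obtain \<beta> where B: "poly (cheb_V (p^s)) t' = int p ^ s + int p^(s+1) * \<beta>"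
    by (metis dvd_def diff_eq_eq add.commute)
  from R1[OF p Suc.prems] obtain \<alpha> where A: "poly (cheb_V p) t = int p + int p^2 * \<alpha>"
    by (metis dvd_def diff_eq_eq add.commute)
  have V: "poly (cheb_V (p^Suc s)) t = poly (cheb_V p) t * poly (cheb_V (p^s)) t'"
    unfolding t'_def power_Suc by (rule E3i)
  define P where "P = int p"
  define Q where "Q = P ^ s"
  have q1: "P ^ (s+1) = Q * P" unfolding Q_def by simp
  have q2: "P ^ (Suc s + 1) = Q * P * P" unfolding Q_def by simp
  have q3: "P ^ Suc s = Q * P" unfolding Q_def by simp
  have q4: "P ^ 2 = P * P" by (simp add: power2_eq_square)
  have "poly (cheb_V (p^Suc s)) t - int p ^ Suc s = Q * P * P * (\<beta> + \<alpha> + P * \<alpha> * \<beta>)"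
    unfolding V A B P_def[symmetric] q1 q3 q4 Q_def[symmetric] by (simp add: algebra_simps)
  thus ?case unfolding P_def[symmetric] q2 by simp
qed

lemma L4d:
  assumes p: "prime p" "p > 3" and "int p dvd t^2 - 1"
  shows "int p ^ s dvd poly (cheb_V (p^s)) t"
proof -
  from L4[OF p assms(3), of s] obtain k where "poly (cheb_V (p^s)) t - int p ^ s = int p^(s+1) * k"
    by (auto simp: dvd_def)
  hence "poly (cheb_V (p^s)) t = int p ^ s * (1 + int p * k)" by (simp add: algebra_simps)
  thus ?thesis by simp
qed

lemma F0:
  assumes p: "prime p" "p > 2" and "int p dvd poly (cheb_V p) t"
  shows "int p dvd t^2 - 1"
proof -
  define T where "T = poly (cheb_T p) t"
  have E: "T^2 - 1 = (t^2 - 1) * poly (cheb_V p) t ^ 2" using E2i[of p t] unfolding T_def by simp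
  have a: "int p dvd T^2 - 1" unfolding E using assms(3) by (simp add: power2_eq_square)
  have "int p dvd T - t" unfolding T_def by (rule FT0[OF p])
  hence b: "int p dvd (T - t) * (T + t)" by (rule dvd_mult2)
  have "int p dvd (T^2 - 1) - (T - t) * (T + t)" using a b by (rule dvd_diff)
  moreover have "(T^2 - 1) - (T - t) * (T + t) = t^2 - 1" by (simp add: power2_eq_square algebra_simps)
  ultimately show ?thesis by simp
qed

lemma Fdesc:
  assumes p: "prime p" "p > 2" and nd: "\<not> int p dvd u^2 - 1"
  shows "int p dvd poly (cheb_V (p^s * k)) u \<Longrightarrow> int p dvd poly (cheb_V k) u"
proof (induction s)
  case 0 then show ?case by simp
next
  case (Suc s)
  define a where "a = p^s * k"
  have idx: "p^Suc s * k = a * p" unfolding a_def by (simp add: ac_simps)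
  define t' where "t' = poly (cheb_T a) u"
  have V: "poly (cheb_V (p^Suc s * k)) u = poly (cheb_V a) u * poly (cheb_V p) t'"
    unfolding idx t'_def by (rule E3i)
  have pp: "prime (int p)" using p by simp
  have "int p dvd poly (cheb_V a) u"
  proof (rule ccontr)
    assume na: "\<not> int p dvd poly (cheb_V a) u"
    have "int p dvd poly (cheb_V a) u * poly (cheb_V p) t'" using Suc.prems V by simp
    hence "int p dvd poly (cheb_V p) t'" using na pp prime_dvd_mult_iff by blast
    hence "int p dvd t'^2 - 1" by (rule F0[OF p])
    moreover have "t'^2 - 1 = (u^2 - 1) * poly (cheb_V a) u ^ 2" using E2i[of a u] unfolding t'_def by simp
    ultimately have "int p dvd (u^2 - 1) * poly (cheb_V a) u ^ 2" by simp
    hence "int p dvd u^2 - 1 \<or> int p dvd poly (cheb_V a) u ^ 2" using pp prime_dvd_mult_iff by blast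
    thus False using nd na pp prime_dvd_power by blast
  qed
  thus ?case unfolding a_def by (rule Suc.IH)
qed

lemma LB:
  assumes p: "prime p" "p > 3" and nd: "\<not> int p dvd u^2 - 1"
    and dv: "int p dvd poly (cheb_V (p^s * k)) u"
  shows "int p ^ (s+1) dvd poly (cheb_V (p^s * k)) u"
proof -
  have p2: "p > 2" using p by simp
  have vk: "int p dvd poly (cheb_V k) u" by (rule Fdesc[OF p(1) p2 nd dv])
  define t' where "t' = poly (cheb_T k) u"
  have "t'^2 - 1 = (u^2 - 1) * poly (cheb_V k) u ^ 2" using E2i[of k u] unfolding t'_def by simp
  moreover have "int p dvd (u^2 - 1) * poly (cheb_V k) u ^ 2" using vk by (simp add: power2_eq_square)
  ultimately have "int p dvd t'^2 - 1" by simp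
  hence "int p ^ s dvd poly (cheb_V (p^s)) t'" by (rule L4d[OF p])
  hence "int p * int p ^ s dvd poly (cheb_V k) u * poly (cheb_V (p^s)) t'" using vk by (simp add: mult_dvd_mono)
  moreover have "poly (cheb_V (p^s * k)) u = poly (cheb_V k) u * poly (cheb_V (p^s)) t'"
    unfolding t'_def by (subst mult.commute) (rule E3i)
  ultimately show ?thesis by (simp add: ac_simps)
qed

lemma LBram:
  assumes p: "prime p" "p > 3" and d: "int p dvd u^2 - 1"
  shows "int p ^ (s+1) dvd poly (cheb_V (p^s * k)) u - int p ^ s * poly (cheb_V k) u"
proof -
  define t' where "t' = poly (cheb_T k) u"
  have "t'^2 - 1 = (u^2 - 1) * poly (cheb_V k) u ^ 2" using E2i[of k u] unfolding t'_def by simp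
  moreover have "int p dvd (u^2 - 1) * poly (cheb_V k) u ^ 2" using d by simp
  ultimately have "int p dvd t'^2 - 1" by simp
  hence "int p ^ (s+1) dvd poly (cheb_V (p^s)) t' - int p ^ s" by (rule L4[OF p])
  hence "int p ^ (s+1) dvd poly (cheb_V k) u * (poly (cheb_V (p^s)) t' - int p ^ s)" by (rule dvd_mult)
  moreover have "poly (cheb_V (p^s * k)) u = poly (cheb_V k) u * poly (cheb_V (p^s)) t'"
    unfolding t'_def by (subst mult.commute) (rule E3i)
  ultimately show ?thesis by (simp add: algebra_simps)
qed

lemma sigma_vals:
  assumes "\<sigma> = 1 \<or> \<sigma> = (-1::int)"
  shows "poly (cheb_T m) \<sigma> = \<sigma>^m \<and> poly (cheb_V m) \<sigma> = \<sigma>^(m+1) * int m"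
  using assms TV_one[of m] TV_m1[of m] by auto

lemma sig_even:
  assumes "\<sigma> = 1 \<or> \<sigma> = (-1::int)" "even m"
  shows "\<sigma>^m = 1"
  using assms by auto

lemma ram_key:
  assumes p: "prime p" "p > 2" and sg: "\<sigma> = 1 \<or> \<sigma> = (-1::int)" and xs: "int p dvd x - \<sigma>"
    and ep: "\<epsilon> = 1 \<or> \<epsilon> = (-1::int)" and ne: "int p dvd int n - \<epsilon>"
    and ce: "int p dvd c - \<sigma>^e" and ev: "even (e + k + 1)"
    and d: "int p dvd int n * c * poly (cheb_V k) x + \<epsilon> * int k"
  shows "int p dvd int k"
proof -
  have "int p dvd poly (cheb_V k) x - poly (cheb_V k) \<sigma>" by (rule poly_dvd_diff[OF xs])
  hence c1: "[poly (cheb_V k) x = \<sigma>^(k+1) * int k] (mod int p)"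
    using sigma_vals[OF sg, of k] by (simp add: cong_iff_dvd_diff)
  have c2: "[int n = \<epsilon>] (mod int p)" using ne by (simp add: cong_iff_dvd_diff)
  have c3: "[c = \<sigma>^e] (mod int p)" using ce by (simp add: cong_iff_dvd_diff)
  have cc: "[int n * c * poly (cheb_V k) x = \<epsilon> * \<sigma>^e * (\<sigma>^(k+1) * int k)] (mod int p)"
    by (intro cong_mult c1 c2 c3)
  have s1: "\<sigma>^e * \<sigma>^(k+1) = 1" using sig_even[OF sg ev] by (simp only: add.assoc power_add)
  have eq: "\<epsilon> * \<sigma>^e * (\<sigma>^(k+1) * int k) = \<epsilon> * int k"
  proof -
    have "\<epsilon> * \<sigma>^e * (\<sigma>^(k+1) * int k) = \<epsilon> * (\<sigma>^e * \<sigma>^(k+1)) * int k" by (simp only: mult.assoc)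
    thus ?thesis unfolding s1 by simp
  qed
  have "[int n * c * poly (cheb_V k) x = \<epsilon> * int k] (mod int p)" using cc unfolding eq .
  hence "[int n * c * poly (cheb_V k) x + \<epsilon> * int k = \<epsilon> * int k + \<epsilon> * int k] (mod int p)"
    by (rule cong_add) simp
  hence "int p dvd \<epsilon> * int k + \<epsilon> * int k" using d by (simp add: cong_dvd_iff)
  hence h: "int p dvd \<epsilon> * (\<epsilon> * int k + \<epsilon> * int k)" by (rule dvd_mult)
  have eq2: "\<epsilon> * (\<epsilon> * int k + \<epsilon> * int k) = 2 * int k" using ep by auto
  have "int p dvd 2 * int k" using h unfolding eq2 .
  thus ?thesis by (rule cancel2'[OF p])
qed

lemma eps_cancel:
  assumes "\<epsilon> = 1 \<or> \<epsilon> = (-1::int)" "m dvd \<epsilon> * a" shows "m dvd a"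
  using assms by auto

lemma ind_unram:
  assumes p: "prime p" "p > 3" and nd: "\<not> int p dvd x^2 - 1"
    and vj: "int p dvd poly (cheb_V j) x"
    and ep: "\<epsilon> = 1 \<or> \<epsilon> = (-1::int)"
    and Id: "N = 2 * int n * c * poly (cheb_V j) x + 2 * \<epsilon> * int j"
    and Nd: "int p ^ w dvd N"
  shows "s \<le> w \<Longrightarrow> int p ^ s dvd int j"
proof (induction s)
  case 0 then show ?case by simp
next
  case (Suc s)
  have p2: "p > 2" using p by simp
  have "int p ^ s dvd int j" using Suc by simp
  hence "p ^ s dvd j" by (metis of_nat_power int_dvd_int_iff)
  then obtain k where jk: "j = p^s * k" by blast
  have "int p ^ (s+1) dvd poly (cheb_V (p^s * k)) x" by (rule LB[OF p nd]) (use vj jk in simp)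
  hence a: "int p ^ (s+1) dvd 2 * int n * c * poly (cheb_V j) x" using jk by (simp add: dvd_mult)
  have "int p ^ (s+1) dvd int p ^ w" by (rule le_imp_power_dvd) (use Suc in simp)
  hence b: "int p ^ (s+1) dvd N" using Nd by (rule dvd_trans)
  have "int p ^ (s+1) dvd N - 2 * int n * c * poly (cheb_V j) x" using b a by (rule dvd_diff)
  hence "int p ^ (s+1) dvd \<epsilon> * (2 * int j)" unfolding Id by (simp add: ac_simps)
  hence "int p ^ (s+1) dvd 2 * int j" by (rule eps_cancel[OF ep])
  hence "int p ^ (s+1) dvd int j" by (rule cancel2[OF p(1) p2])
  thus ?case by simp
qed

lemma ind_ram:
  assumes p: "prime p" "p > 3" and sg: "\<sigma> = 1 \<or> \<sigma> = (-1::int)" and xs: "int p dvd x - \<sigma>"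
    and ep: "\<epsilon> = 1 \<or> \<epsilon> = (-1::int)" and ne: "int p dvd int n - \<epsilon>"
    and ce: "int p dvd c - \<sigma>^e" and ev: "even (e + 1 + j)"
    and Id: "N = 2 * int n * c * poly (cheb_V j) x + 2 * \<epsilon> * int j"
    and Nd: "int p ^ w dvd N"
  shows "s \<le> w \<Longrightarrow> int p ^ s dvd int j"
proof (induction s)
  case 0 then show ?case by simp
next
  case (Suc s)
  have p2: "p > 2" using p by simp
  have "int p ^ s dvd int j" using Suc by simp
  hence "p ^ s dvd j" by (metis of_nat_power int_dvd_int_iff)
  then obtain k where jk: "j = p^s * k" by blast
  have dx: "int p dvd x^2 - 1"
  proof -
    have "int p dvd (x - \<sigma>) * (x + \<sigma>)" using xs by (rule dvd_mult2)
    moreover have "(x - \<sigma>) * (x + \<sigma>) = x^2 - 1" using sg by (auto simp: power2_eq_square algebra_simps)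
    ultimately show ?thesis by simp
  qed
  have L: "int p ^ (s+1) dvd poly (cheb_V j) x - int p ^ s * poly (cheb_V k) x"
    unfolding jk by (rule LBram[OF p dx])
  have "int p ^ (s+1) dvd int p ^ w" by (rule le_imp_power_dvd) (use Suc in simp)
  hence b: "int p ^ (s+1) dvd N" using Nd by (rule dvd_trans)
  have a: "int p ^ (s+1) dvd 2 * int n * c * (poly (cheb_V j) x - int p ^ s * poly (cheb_V k) x)"
    using L by (rule dvd_mult)
  have "int p ^ (s+1) dvd N - 2 * int n * c * (poly (cheb_V j) x - int p ^ s * poly (cheb_V k) x)"
    using b a by (rule dvd_diff)
  moreover have "N - 2 * int n * c * (poly (cheb_V j) x - int p ^ s * poly (cheb_V k) x)
      = int p ^ s * (2 * (int n * c * poly (cheb_V k) x + \<epsilon> * int k))"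
    unfolding Id jk by (simp add: algebra_simps)
  ultimately have "int p ^ s * int p dvd int p ^ s * (2 * (int n * c * poly (cheb_V k) x + \<epsilon> * int k))"
    by (simp add: ac_simps)
  hence "int p dvd 2 * (int n * c * poly (cheb_V k) x + \<epsilon> * int k)"
    using p by (subst (asm) dvd_times_left_cancel_iff) simp_all
  hence d: "int p dvd int n * c * poly (cheb_V k) x + \<epsilon> * int k" by (rule cancel2'[OF p(1) p2])
  have evk: "even (e + k + 1)"
  proof -
    have "odd p" using p prime_odd_nat by auto
    hence "odd (p^s)" by simp
    hence "even (p^s + 1)" by simp
    hence e2: "even ((p^s + 1) * k)" by (rule dvd_mult2)
    have "p^s * k + k = (p^s + 1) * k" by (simp add: algebra_simps)
    hence e3: "even (p^s * k + k)" using e2 by (simp only:)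
    define J where "J = p^s * k"
    have "even (J + k)" using e3 unfolding J_def .
    moreover have "even (e + 1 + J)" using ev unfolding jk J_def .
    ultimately show ?thesis by presburger
  qed
  have "int p dvd int k" by (rule ram_key[OF p(1) p2 sg xs ep ne ce evk d])
  hence "int p ^ s * int p dvd int p ^ s * int k" by (rule mult_dvd_mono[OF dvd_refl])
  thus ?case unfolding jk by (simp add: ac_simps)
qed

lemma ram_conclude:
  assumes p: "prime p" "p > 3" and dy: "int p dvd y^2 - 1" and jw: "int p ^ w dvd int j"
  shows "int p ^ (w+1) dvd (y^2 - 1) * poly (cheb_V j) y"
proof -
  have "p ^ w dvd j" using jw by (metis of_nat_power int_dvd_int_iff)
  then obtain k where jk: "j = p^w * k" by blast
  have "int p ^ (w+1) dvd poly (cheb_V (p^w * k)) y - int p ^ w * poly (cheb_V k) y"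
    by (rule LBram[OF p dy])
  hence "int p ^ w dvd poly (cheb_V (p^w * k)) y - int p ^ w * poly (cheb_V k) y"
    by (rule dvd_trans[rotated]) (simp add: le_imp_power_dvd)
  hence "int p ^ w dvd (poly (cheb_V (p^w * k)) y - int p ^ w * poly (cheb_V k) y) + int p ^ w * poly (cheb_V k) y"
    by (rule dvd_add) (rule dvd_triv_left)
  hence "int p ^ w dvd poly (cheb_V j) y" unfolding jk by simp
  hence "int p * int p ^ w dvd (y^2 - 1) * poly (cheb_V j) y" using dy by (rule mult_dvd_mono[rotated])
  thus ?thesis by (simp add: ac_simps)
qed

lemma unram_conclude:
  assumes p: "prime p" "p > 3" and ny: "\<not> int p dvd y^2 - 1" and vy: "int p dvd poly (cheb_V j) y"
    and jw: "int p ^ w dvd int j"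
  shows "int p ^ (w+1) dvd (y^2 - 1) * poly (cheb_V j) y"
proof -
  have "p ^ w dvd j" using jw by (metis of_nat_power int_dvd_int_iff)
  then obtain k where jk: "j = p^w * k" by blast
  have "int p ^ (w+1) dvd poly (cheb_V (p^w * k)) y" by (rule LB[OF p ny]) (use vy jk in simp)
  hence "int p ^ (w+1) dvd poly (cheb_V j) y" using jk by simp
  thus ?thesis by (rule dvd_mult)
qed

theorem lemma6:
  fixes p n w h t :: nat and x :: int
  assumes "prime p" and "p > 3"
    and "n > 1" and "coprime n p" and "coprime n (p^2 - 1)"
    and "w \<ge> 1"
    and "0 \<le> x" and "x \<le> int p - 1"
    and "[poly (cheb_T n) x = x] (mod int p)"
    and "[poly (pderiv (cheb_T n)) x = 1] (mod int p ^ w)"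
    and "1 \<le> t" and "t \<le> w + 1"
  shows "[poly (cheb_T n) (x + int h * int p) = x + int h * int p] (mod int p ^ t)"
proof -
  note p = assms(1,2)
  have pp: "prime (int p)" using assms(1) by simp
  have p2: "p > 2" using assms(2) by simp
  have oddp: "odd p" using assms(1) p2 prime_odd_nat by auto
  have oddn: "odd n"
  proof
    assume en: "even n"
    have "odd (p^2)" using oddp by simp
    hence "even (p^2 - 1)" by presburger
    hence "is_unit (2::nat)" using coprime_common_divisor[OF assms(5) en] by blast
    thus False by simp
  qed
  obtain b where nb: "n = 2*b+1" using oddn oddE by blast
  define y where "y = x + int h * int p"
  define N where "N = int n * poly (cheb_V n) x - 1"
  have Nd: "int p ^ w dvd N"
  proof -
    have "poly (pderiv (cheb_T n)) x = int n * poly (cheb_V n) x" by (simp add: pderiv_T)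
    thus ?thesis using assms(10) unfolding N_def by (simp add: cong_iff_dvd_diff)
  qed
  have Vn_a: "poly (cheb_V n) x = 2 * poly (cheb_V (b+1)) x * poly (cheb_T b) x - 1"
    unfolding nb E6a by simp
  have Vn_b: "poly (cheb_V n) x = 2 * poly (cheb_T (b+1)) x * poly (cheb_V b) x + 1"
    unfolding nb E6b by simp
  have IdA: "N = 2 * int n * poly (cheb_T b) x * poly (cheb_V (b+1)) x + 2 * (-1) * int (b+1)"
    unfolding N_def Vn_a using nb by (simp add: algebra_simps)
  have IdB: "N = 2 * int n * poly (cheb_T (b+1)) x * poly (cheb_V b) x + 2 * 1 * int b"
    unfolding N_def Vn_b using nb by (simp add: algebra_simps)
  have E4p: "poly (cheb_T n) u - u = 2 * (u^2 - 1) * poly (cheb_V (b+1)) u * poly (cheb_V b) u" for u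
  proof -
    have "poly (cheb_T (2*b+1) - Xp) u = poly (2 * Dp * cheb_V (b+1) * cheb_V b) u" by (simp only: E4)
    thus ?thesis unfolding nb by simp
  qed
  have xy: "int p dvd y - x" unfolding y_def by simp
  have xy2: "int p dvd (y^2 - 1) - (x^2 - 1)"
  proof -
    have "int p dvd (y - x) * (y + x)" using xy by (rule dvd_mult2)
    moreover have "(y - x) * (y + x) = (y^2 - 1) - (x^2 - 1)" by (simp add: power2_eq_square algebra_simps)
    ultimately show ?thesis by simp
  qed
  have key: "int p ^ (w+1) dvd (y^2 - 1) * poly (cheb_V (b+1)) y \<or>
             int p ^ (w+1) dvd (y^2 - 1) * poly (cheb_V b) y"
  proof (cases "int p dvd x^2 - 1")
    case False
    have ny: "\<not> int p dvd y^2 - 1"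
    proof
      assume "int p dvd y^2 - 1"
      hence "int p dvd (y^2 - 1) - ((y^2 - 1) - (x^2 - 1))" using xy2 by (rule dvd_diff)
      thus False using False by simp
    qed
    have "int p dvd poly (cheb_T n) x - x" using assms(9) by (simp add: cong_iff_dvd_diff)
    hence "int p dvd 2 * (x^2 - 1) * poly (cheb_V (b+1)) x * poly (cheb_V b) x" unfolding E4p .
    hence "int p dvd 2 \<or> int p dvd x^2 - 1 \<or> int p dvd poly (cheb_V (b+1)) x \<or> int p dvd poly (cheb_V b) x"
      unfolding prime_dvd_mult_iff[OF pp] by blast
    hence "int p dvd poly (cheb_V (b+1)) x \<or> int p dvd poly (cheb_V b) x"
      using False prime_odd_not_dvd2[OF assms(1) p2] by blast
    thus ?thesis
    proof
      assume va: "int p dvd poly (cheb_V (b+1)) x"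
      have "int p ^ w dvd int (b+1)"
        by (rule ind_unram[OF p False va _ IdA Nd]) simp_all
      moreover have "int p dvd poly (cheb_V (b+1)) y"
      proof -
        have "int p dvd poly (cheb_V (b+1)) y - poly (cheb_V (b+1)) x" by (rule poly_dvd_diff[OF xy])
        thus ?thesis using va by (metis dvd_diff_left_iff)
      qed
      ultimately show ?thesis using unram_conclude[OF p ny] by blast
    next
      assume vb: "int p dvd poly (cheb_V b) x"
      have "int p ^ w dvd int b"
        by (rule ind_unram[OF p False vb _ IdB Nd]) simp_all
      moreover have "int p dvd poly (cheb_V b) y"
      proof -
        have "int p dvd poly (cheb_V b) y - poly (cheb_V b) x" by (rule poly_dvd_diff[OF xy])
        thus ?thesis using vb by (metis dvd_diff_left_iff)
      qed
      ultimately show ?thesis using unram_conclude[OF p ny] by blast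
    qed
  next
    case True
    have dy: "int p dvd y^2 - 1"
    proof -
      have "int p dvd ((y^2 - 1) - (x^2 - 1)) + (x^2 - 1)" using xy2 True by (rule dvd_add)
      thus ?thesis by simp
    qed
    have "(x - 1) * (x + 1) = x^2 - 1" by (simp add: power2_eq_square algebra_simps)
    hence "int p dvd (x - 1) * (x + 1)" using True by simp
    hence disj: "int p dvd x - 1 \<or> int p dvd x + 1" unfolding prime_dvd_mult_iff[OF pp] .
    have "\<exists>\<sigma>. (\<sigma> = 1 \<or> \<sigma> = (-1::int)) \<and> int p dvd x - \<sigma>"
    proof (cases "int p dvd x - 1")
      case True thus ?thesis by blast
    next
      case False
      hence "int p dvd x + 1" using disj by blast
      hence "int p dvd x - (-1)" by simp
      thus ?thesis by blast
    qed
    then obtain \<sigma> where sg: "\<sigma> = 1 \<or> \<sigma> = (-1::int)" and xs: "int p dvd x - \<sigma>" by blast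
    have "int p dvd int p ^ w" using assms(6) by (intro dvd_power) simp
    hence N1: "int p dvd N" using Nd by (rule dvd_trans)
    have "int p dvd poly (cheb_V n) x - poly (cheb_V n) \<sigma>" by (rule poly_dvd_diff[OF xs])
    moreover have "poly (cheb_V n) \<sigma> = int n"
    proof -
      have "even (n+1)" using oddn by simp
      hence "\<sigma>^(n+1) = 1" by (rule sig_even[OF sg])
      thus ?thesis using sigma_vals[OF sg, of n] by simp
    qed
    ultimately have "int p dvd poly (cheb_V n) x - int n" by simp
    hence "int p dvd int n * (poly (cheb_V n) x - int n)" by (rule dvd_mult)
    hence "int p dvd N - int n * (poly (cheb_V n) x - int n)" using N1 by (intro dvd_diff)
    moreover have "N - int n * (poly (cheb_V n) x - int n) = int n * int n - 1"
      unfolding N_def by (simp add: algebra_simps)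
    moreover have "int n * int n - 1 = 4 * (int b * int (b+1))"
      unfolding nb by (simp add: algebra_simps)
    ultimately have "int p dvd 4 * (int b * int (b+1))" by simp
    moreover have "\<not> int p dvd 4"
    proof
      assume "int p dvd 4"
      hence "int p dvd 2 * 2" by simp
      hence "int p dvd 2" using pp prime_dvd_mult_iff by blast
      thus False using prime_odd_not_dvd2[OF assms(1) p2] by blast
    qed
    ultimately have "int p dvd int b \<or> int p dvd int (b+1)" using pp by (simp add: prime_dvd_mult_iff)
    thus ?thesis
    proof
      assume db: "int p dvd int b"
      have ne: "int p dvd int n - 1" using db unfolding nb by simp
      have ce: "int p dvd poly (cheb_T (b+1)) x - \<sigma>^(b+1)"
      proof -
        have "int p dvd poly (cheb_T (b+1)) x - poly (cheb_T (b+1)) \<sigma>" by (rule poly_dvd_diff[OF xs])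
        thus ?thesis using sigma_vals[OF sg, of "b+1"] by simp
      qed
      have "int p ^ w dvd int b"
        by (rule ind_ram[OF p sg xs _ ne ce _ IdB Nd]) simp_all
      thus ?thesis using ram_conclude[OF p dy] by blast
    next
      assume da: "int p dvd int (b+1)"
      have ne: "int p dvd int n - (-1)"
      proof -
        have eq: "int n - (-1) = 2 * int (b+1)" unfolding nb by simp
        show ?thesis unfolding eq using da by (rule dvd_mult)
      qed
      have ce: "int p dvd poly (cheb_T b) x - \<sigma>^b"
      proof -
        have "int p dvd poly (cheb_T b) x - poly (cheb_T b) \<sigma>" by (rule poly_dvd_diff[OF xs])
        thus ?thesis using sigma_vals[OF sg, of b] by simp
      qed
      have "int p ^ w dvd int (b+1)"
        by (rule ind_ram[OF p sg xs _ ne ce _ IdA Nd]) simp_all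
      thus ?thesis using ram_conclude[OF p dy] by blast
    qed
  qed
  have r1: "2 * (y^2 - 1) * poly (cheb_V (b+1)) y * poly (cheb_V b) y = ((y^2 - 1) * poly (cheb_V (b+1)) y) * (2 * poly (cheb_V b) y)"
    by (simp only: ac_simps)
  have r2: "2 * (y^2 - 1) * poly (cheb_V (b+1)) y * poly (cheb_V b) y = ((y^2 - 1) * poly (cheb_V b) y) * (2 * poly (cheb_V (b+1)) y)"
    by (simp only: ac_simps)
  have main: "int p ^ (w+1) dvd poly (cheb_T n) y - y"
    unfolding E4p using key
  proof
    assume "int p ^ (w+1) dvd (y^2 - 1) * poly (cheb_V (b+1)) y"
    thus "int p ^ (w+1) dvd 2 * (y^2 - 1) * poly (cheb_V (b+1)) y * poly (cheb_V b) y" unfolding r1 by (rule dvd_mult2)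
  next
    assume "int p ^ (w+1) dvd (y^2 - 1) * poly (cheb_V b) y"
    thus "int p ^ (w+1) dvd 2 * (y^2 - 1) * poly (cheb_V (b+1)) y * poly (cheb_V b) y" unfolding r2 by (rule dvd_mult2)
  qed
  have "int p ^ t dvd int p ^ (w+1)" using assms(12) by (rule le_imp_power_dvd)
  hence "int p ^ t dvd poly (cheb_T n) y - y" using main by (rule dvd_trans)
  thus ?thesis unfolding y_def by (simp add: cong_iff_dvd_diff)
qed

end
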